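(* Let $G$ be a finite simple graph of order $n$ having no connected component of order less than $3$, and let $\mathcal{G}$ be an arbitrary Abelian group of order at least $\Delta(G)+\mathrm{col}(G)+1$. Then there exists a labeling $f\colon E(G)\to\mathcal{G}$ with $f(e)\neq 0$ for all edges $e$, $w_f(v)\neq 0$ for all vertices $v$, and $w_f(u)\neq w_f(v)$ for every edge $uv$.
   Context: $w_f(v)=\sum_{u\in N(v)}f(uv)$ (sum in $\mathcal{G}$, identity $0$). $\Delta(G)$ is the maximum degree; the coloring number $\mathrm{col}(G)$ is the least $k$ such that every subgraph of $G$ has minimum degree less than $k$. *)

theory Defs
  imports Main
begin

definition simple_graph :: "'a set \<Rightarrow> 'a set set \<Rightarrow> bool" where
  "simple_graph V E \<longleftrightarrow> finite V \<and> (\<forall>e\<in>E. e \<subseteq> V \<and> card e = 2)"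

definition neighbours :: "'a set set \<Rightarrow> 'a \<Rightarrow> 'a set" where
  "neighbours E v = {u. {u, v} \<in> E}"

definition degree :: "'a set set \<Rightarrow> 'a \<Rightarrow> nat" where
  "degree E v = card (neighbours E v)"

definition adjacent :: "'a set set \<Rightarrow> 'a \<Rightarrow> 'a \<Rightarrow> bool" where
  "adjacent E u v \<longleftrightarrow> {u, v} \<in> E"

definition component :: "'a set \<Rightarrow> 'a set set \<Rightarrow> 'a \<Rightarrow> 'a set" where
  "component V E v = {u \<in> V. (adjacent E)\<^sup>*\<^sup>* v u}"

definition max_degree :: "'a set \<Rightarrow> 'a set set \<Rightarrow> nat" where
  "max_degree V E = Max (insert 0 (degree E ` V))"

definition subgraph :: "'a set \<Rightarrow> 'a set set \<Rightarrow> 'a set \<Rightarrow> 'a set set \<Rightarrow> bool" where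
  "subgraph V' E' V E \<longleftrightarrow> V' \<subseteq> V \<and> E' \<subseteq> E \<and> (\<forall>e\<in>E'. e \<subseteq> V')"

definition col :: "'a set \<Rightarrow> 'a set set \<Rightarrow> nat" where
  "col V E = (LEAST k. \<forall>V' E'. subgraph V' E' V E \<and> V' \<noteq> {} \<longrightarrow>
                          (\<exists>v\<in>V'. degree E' v < k))"

definition wdeg :: "'a set set \<Rightarrow> ('a set \<Rightarrow> 'g::comm_monoid_add) \<Rightarrow> 'a \<Rightarrow> 'g" where
  "wdeg E f v = (\<Sum>u\<in>neighbours E v. f {u, v})"

end

theory Submission
  imports Defs
begin

definition good :: "'a set set \<Rightarrow> ('a set \<Rightarrow> 'g::ab_group_add) \<Rightarrow> 'a set \<Rightarrow> bool" where
  "good E f D \<longleftrightarrow> (\<forall>e\<in>E. f e \<noteq> 0) \<and> (\<forall>v\<in>D. wdeg E f v \<noteq> 0) \<and>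
     (\<forall>a\<in>D. \<forall>b\<in>D. {a,b}\<in>E \<longrightarrow> wdeg E f a \<noteq> wdeg E f b)"

lemma avoid:
  fixes B :: "'g set"
  assumes "finite B" "infinite (UNIV :: 'g set) \<or> card B < card (UNIV :: 'g set)"
  shows "\<exists>x. x \<notin> B"
  using assms ex_new_if_finite by (metis UNIV_I card_mono finite_UNIV leD subsetI)

lemma edge_props:
  assumes "simple_graph V E" "{a,b} \<in> E"
  shows "a \<in> V \<and> b \<in> V \<and> a \<noteq> b"
proof -
  have "{a,b} \<subseteq> V" "card {a,b} = 2" using assms unfolding simple_graph_def by auto
  then show ?thesis by (cases "a = b") auto
qed

lemma nb_sub:
  assumes "simple_graph V E"
  shows "neighbours E v \<subseteq> V" "finite (neighbours E v)"
proof -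
  show "neighbours E v \<subseteq> V" using edge_props[OF assms] unfolding neighbours_def by auto
  then show "finite (neighbours E v)" using assms unfolding simple_graph_def
    using finite_subset by blast
qed

lemma deg_le:
  assumes "simple_graph V E" "v \<in> V"
  shows "degree E v \<le> max_degree V E"
  unfolding max_degree_def
  using assms unfolding simple_graph_def by (intro Max_ge) auto

lemma wdeg_upd_a:
  fixes f :: "'a set \<Rightarrow> 'g::ab_group_add"
  assumes "simple_graph V E" "{a,b} \<in> E"
  shows "wdeg E (f({a,b}:=x)) a = wdeg E f a - f {a,b} + x"
proof -
  have ab: "a \<noteq> b" using edge_props[OF assms] by auto
  have bN: "b \<in> neighbours E a" using assms(2) unfolding neighbours_def by (simp add: insert_commute)
  have fin: "finite (neighbours E a)" using nb_sub[OF assms(1)] by auto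
  have eq: "\<And>u. u \<noteq> b \<Longrightarrow> {u,a} \<noteq> {a,b}" using ab by (auto simp: doubleton_eq_iff)
  have "wdeg E (f({a,b}:=x)) a = (f({a,b}:=x)) {b,a} + (\<Sum>u\<in>neighbours E a - {b}. (f({a,b}:=x)) {u,a})"
    unfolding wdeg_def using sum.remove[OF fin bN] by blast
  also have "\<dots> = x + (\<Sum>u\<in>neighbours E a - {b}. f {u,a})"
    using eq by (auto simp: insert_commute intro!: sum.cong)
  finally have 1: "wdeg E (f({a,b}:=x)) a = x + (\<Sum>u\<in>neighbours E a - {b}. f {u,a})" .
  have 2: "wdeg E f a = f {b,a} + (\<Sum>u\<in>neighbours E a - {b}. f {u,a})"
    unfolding wdeg_def using sum.remove[OF fin bN] by blast
  have 3: "f {b,a} = f {a,b}" by (simp add: insert_commute)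
  show ?thesis unfolding 1 2 3 by (simp add: algebra_simps)
qed

lemma wdeg_upd:
  fixes f :: "'a set \<Rightarrow> 'g::ab_group_add"
  assumes "simple_graph V E" "{a,b} \<in> E"
  shows "wdeg E (f({a,b}:=x)) v = (if v = a \<or> v = b then wdeg E f v - f {a,b} + x else wdeg E f v)"
proof (cases "v = a \<or> v = b")
  case True
  then show ?thesis
  proof
    assume "v = a" then show ?thesis using wdeg_upd_a[OF assms] by simp
  next
    assume "v = b" then show ?thesis using wdeg_upd_a[OF assms(1), of b a f x] assms(2)
      by (simp add: insert_commute)
  qed
next
  case False
  have "\<And>u. {u,v} \<noteq> {a,b}" using False by (auto simp: doubleton_eq_iff)
  then show ?thesis using False unfolding wdeg_def by (auto intro!: sum.cong)
qed



lemma card_ins_le: "finite A \<Longrightarrow> card (insert a A) \<le> Suc (card A)"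
  by (simp add: card_insert_if)

lemma shift_eq: "(c + x = (w::'g::ab_group_add)) = (x = w - c)"
  by (simp add: eq_diff_eq add.commute)

lemma step:
  fixes f :: "'a set \<Rightarrow> 'g::ab_group_add"
  assumes sg: "simple_graph V E" and g: "good E f D" and e: "{y,v} \<in> E"
    and vD: "v \<notin> D" and yD: "y \<notin> D" and fB: "finite B"
    and cnt: "infinite (UNIV :: 'g set) \<or> card B + degree E v + 1 < card (UNIV :: 'g set)"
  shows "\<exists>x. x \<notin> B \<and> good E (f({y,v}:=x)) (insert v D)"
proof -
  define c where "c = wdeg E f v - f {y,v}"
  define W where "W = wdeg E f ` (neighbours E v \<inter> D)"
  define Bad where "Bad = insert 0 (B \<union> (\<lambda>t. t - c) ` (insert 0 W))"
  have yv: "y \<noteq> v" using edge_props[OF sg e] by auto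
  have yN: "y \<in> neighbours E v" using e unfolding neighbours_def by simp
  have finN: "finite (neighbours E v)" using nb_sub[OF sg] by auto
  have dpos: "degree E v \<ge> 1"
  proof -
    have "neighbours E v \<noteq> {}" using yN by blast
    then have "card (neighbours E v) > 0" using finN by (simp add: card_gt_0_iff)
    then show ?thesis unfolding degree_def by simp
  qed
  have "card (neighbours E v \<inter> D) \<le> card (neighbours E v - {y})"
    by (rule card_mono) (use finN in simp, use yD in blast)
  also have "\<dots> = degree E v - 1" unfolding degree_def using yN finN by simp
  finally have cND: "card (neighbours E v \<inter> D) \<le> degree E v - 1" .
  have "card W \<le> card (neighbours E v \<inter> D)" unfolding W_def by (rule card_image_le) (use finN in simp)
  with cND have cW: "card W \<le> degree E v - 1" by linarith
  have finW: "finite W" unfolding W_def using finN by simp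
  have finBad: "finite Bad" unfolding Bad_def using fB finW by simp
  have a1: "card Bad \<le> Suc (card (B \<union> (\<lambda>t. t - c) ` (insert 0 W)))"
    unfolding Bad_def by (rule card_ins_le) (use fB finW in simp)
  have a2: "card (B \<union> (\<lambda>t. t - c) ` (insert 0 W)) \<le> card B + card ((\<lambda>t. t - c) ` (insert 0 W))"
    by (rule card_Un_le)
  have a3: "card ((\<lambda>t. t - c) ` (insert 0 W)) \<le> card (insert 0 W)" by (rule card_image_le) (use finW in simp)
  have a4: "card (insert 0 W) \<le> Suc (card W)" by (rule card_ins_le) (rule finW)
  have cB: "card Bad \<le> card B + degree E v + 1" using a1 a2 a3 a4 cW dpos by linarith
  have "infinite (UNIV :: 'g set) \<or> card Bad < card (UNIV :: 'g set)" using cnt cB by linarith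
  then obtain x where x: "x \<notin> Bad" using avoid[OF finBad] by blast
  define f' where "f' = f({y,v}:=x)"
  have wv: "wdeg E f' v = c + x" unfolding f'_def c_def using wdeg_upd[OF sg e, of f x v] by simp
  have wo: "\<And>d. d \<noteq> y \<Longrightarrow> d \<noteq> v \<Longrightarrow> wdeg E f' d = wdeg E f d"
    unfolding f'_def using wdeg_upd[OF sg e, of f x] by simp
  have x0: "x \<noteq> 0" and xB: "x \<notin> B" and xc: "x \<noteq> 0 - c" and xW: "\<And>w. w \<in> W \<Longrightarrow> x \<noteq> w - c"
    using x unfolding Bad_def by auto
  have g1: "\<forall>e\<in>E. f' e \<noteq> 0" using g x0 unfolding good_def f'_def by auto
  have g2: "\<forall>d\<in>insert v D. wdeg E f' d \<noteq> 0"
  proof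
    fix d assume "d \<in> insert v D"
    then show "wdeg E f' d \<noteq> 0"
    proof
      assume "d = v"
      show ?thesis
      proof
        assume "wdeg E f' d = 0"
        then have "c + x = 0" using wv \<open>d = v\<close> by simp
        then have "x = 0 - c" by (metis add_diff_cancel_left')
        then show False using xc by simp
      qed
    next
      assume dD: "d \<in> D" then have "d \<noteq> y" "d \<noteq> v" using yD vD by auto
      then show ?thesis using wo g dD unfolding good_def by auto
    qed
  qed
  have key: "\<And>d. d \<in> D \<Longrightarrow> {d,v} \<in> E \<Longrightarrow> wdeg E f' d \<noteq> wdeg E f' v"
  proof -
    fix d assume dD: "d \<in> D" and de: "{d,v} \<in> E"
    then have "d \<noteq> y" "d \<noteq> v" using yD vD by auto
    then have "wdeg E f' d = wdeg E f d" using wo by auto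
    moreover have "wdeg E f d \<in> W" unfolding W_def neighbours_def using dD de by auto
    ultimately show "wdeg E f' d \<noteq> wdeg E f' v"
    proof (intro notI)
      assume h1: "wdeg E f' d = wdeg E f d" and h2: "wdeg E f d \<in> W" and h3: "wdeg E f' d = wdeg E f' v"
      then have "wdeg E f d = c + x" using wv by simp
      then have "x = wdeg E f d - c" by (metis add_diff_cancel_left')
      then show False using xW[OF h2] by simp
    qed
  qed
  have g3: "\<forall>a\<in>insert v D. \<forall>b\<in>insert v D. {a,b}\<in>E \<longrightarrow> wdeg E f' a \<noteq> wdeg E f' b"
  proof (intro ballI impI)
    fix a b assume a: "a \<in> insert v D" and b: "b \<in> insert v D" and ab: "{a,b} \<in> E"
    have "a \<noteq> b" using edge_props[OF sg ab] by auto
    show "wdeg E f' a \<noteq> wdeg E f' b"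
    proof (cases "a = v")
      case True
      then have "b \<in> D" using b \<open>a \<noteq> b\<close> by auto
      then show ?thesis using key[of b] ab True by (metis insert_commute)
    next
      case False
      then have aD: "a \<in> D" using a by auto
      show ?thesis
      proof (cases "b = v")
        case True then show ?thesis using key[OF aD] ab by auto
      next
        case False
        then have bD: "b \<in> D" using b by auto
        have "a \<noteq> y" "a \<noteq> v" "b \<noteq> y" "b \<noteq> v" using aD bD yD vD by auto
        then have "wdeg E f' a = wdeg E f a" "wdeg E f' b = wdeg E f b"
          using wo by auto
        moreover have "wdeg E f a \<noteq> wdeg E f b" using g aD bD ab unfolding good_def by blast
        ultimately show ?thesis by simp
      qed
    qed
  qed
  have "good E f' (insert v D)" unfolding good_def using g1 g2 g3 by blast
  then show ?thesis using xB unfolding f'_def by blast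
qed


lemma ustep:
  fixes f :: "'a set \<Rightarrow> 'g::ab_group_add"
  assumes sg: "simple_graph V E" and g: "good E f D" and e: "{r,u} \<in> E"
    and rD: "r \<notin> D" and uD: "u \<notin> D" and ne: "wdeg E f r \<noteq> wdeg E f u"
    and cnt: "infinite (UNIV :: 'g set) \<or> degree E u + degree E r + 1 < card (UNIV :: 'g set)"
  shows "\<exists>x. good E (f({r,u}:=x)) (insert u (insert r D))"
proof -
  have ru: "r \<noteq> u" using edge_props[OF sg e] by auto
  define cu where "cu = wdeg E f u - f {r,u}"
  define cr where "cr = wdeg E f r - f {r,u}"
  define Wu where "Wu = wdeg E f ` (neighbours E u \<inter> D)"
  define Wr where "Wr = wdeg E f ` (neighbours E r \<inter> D)"
  define Bad where "Bad = insert 0 ((\<lambda>t. t - cu) ` (insert 0 Wu) \<union> (\<lambda>t. t - cr) ` (insert 0 Wr))"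
  have rN: "r \<in> neighbours E u" using e unfolding neighbours_def by simp
  have uN: "u \<in> neighbours E r" using e unfolding neighbours_def by (simp add: insert_commute)
  have finNu: "finite (neighbours E u)" and finNr: "finite (neighbours E r)" using nb_sub[OF sg] by auto
  have du: "degree E u \<ge> 1"
  proof -
    have "neighbours E u \<noteq> {}" using rN by blast
    then have "card (neighbours E u) > 0" using finNu by (simp add: card_gt_0_iff)
    then show ?thesis unfolding degree_def by simp
  qed
  have dr: "degree E r \<ge> 1"
  proof -
    have "neighbours E r \<noteq> {}" using uN by blast
    then have "card (neighbours E r) > 0" using finNr by (simp add: card_gt_0_iff)
    then show ?thesis unfolding degree_def by simp
  qed
  have "card (neighbours E u \<inter> D) \<le> card (neighbours E u - {r})"
    by (rule card_mono) (use finNu in simp, use rD in blast)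
  also have "\<dots> = degree E u - 1" unfolding degree_def using rN finNu by simp
  finally have c1: "card (neighbours E u \<inter> D) \<le> degree E u - 1" .
  have "card Wu \<le> card (neighbours E u \<inter> D)" unfolding Wu_def by (rule card_image_le) (use finNu in simp)
  with c1 have cWu: "card Wu \<le> degree E u - 1" by linarith
  have "card (neighbours E r \<inter> D) \<le> card (neighbours E r - {u})"
    by (rule card_mono) (use finNr in simp, use uD in blast)
  also have "\<dots> = degree E r - 1" unfolding degree_def using uN finNr by simp
  finally have c2: "card (neighbours E r \<inter> D) \<le> degree E r - 1" .
  have "card Wr \<le> card (neighbours E r \<inter> D)" unfolding Wr_def by (rule card_image_le) (use finNr in simp)
  with c2 have cWr: "card Wr \<le> degree E r - 1" by linarith
  have finWu: "finite Wu" unfolding Wu_def using finNu by simp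
  have finWr: "finite Wr" unfolding Wr_def using finNr by simp
  have finBad: "finite Bad" unfolding Bad_def using finWu finWr by simp
  have a1: "card Bad \<le> Suc (card ((\<lambda>t. t - cu) ` (insert 0 Wu) \<union> (\<lambda>t. t - cr) ` (insert 0 Wr)))"
    unfolding Bad_def by (rule card_ins_le) (use finWu finWr in simp)
  have a2: "card ((\<lambda>t. t - cu) ` (insert 0 Wu) \<union> (\<lambda>t. t - cr) ` (insert 0 Wr)) \<le> card ((\<lambda>t. t - cu) ` (insert 0 Wu)) + card ((\<lambda>t. t - cr) ` (insert 0 Wr))"
    by (rule card_Un_le)
  have a3: "card ((\<lambda>t. t - cu) ` (insert 0 Wu)) \<le> card (insert 0 Wu)" by (rule card_image_le) (use finWu in simp)
  have a4: "card ((\<lambda>t. t - cr) ` (insert 0 Wr)) \<le> card (insert 0 Wr)" by (rule card_image_le) (use finWr in simp)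
  have a5: "card (insert 0 Wu) \<le> Suc (card Wu)" by (rule card_ins_le) (rule finWu)
  have a6: "card (insert 0 Wr) \<le> Suc (card Wr)" by (rule card_ins_le) (rule finWr)
  have cB: "card Bad \<le> degree E u + degree E r + 1" using a1 a2 a3 a4 a5 a6 cWu cWr du dr by linarith
  have "infinite (UNIV :: 'g set) \<or> card Bad < card (UNIV :: 'g set)" using cnt cB by linarith
  then obtain x where x: "x \<notin> Bad" using avoid[OF finBad] by blast
  define f' where "f' = f({r,u}:=x)"
  have wu: "wdeg E f' u = cu + x" unfolding f'_def cu_def using wdeg_upd[OF sg e, of f x u] by simp
  have wr: "wdeg E f' r = cr + x" unfolding f'_def cr_def using wdeg_upd[OF sg e, of f x r] by simp
  have wo: "\<And>d. d \<noteq> r \<Longrightarrow> d \<noteq> u \<Longrightarrow> wdeg E f' d = wdeg E f d"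
    unfolding f'_def using wdeg_upd[OF sg e, of f x] by simp
  have x0: "x \<noteq> 0" and xcu: "x \<noteq> 0 - cu" and xcr: "x \<noteq> 0 - cr"
    and xWu: "\<And>w. w \<in> Wu \<Longrightarrow> x \<noteq> w - cu" and xWr: "\<And>w. w \<in> Wr \<Longrightarrow> x \<noteq> w - cr"
    using x unfolding Bad_def by auto
  have neq: "wdeg E f' r \<noteq> wdeg E f' u"
  proof
    assume "wdeg E f' r = wdeg E f' u"
    then have "cr = cu" using wr wu by simp
    then show False using ne unfolding cr_def cu_def by simp
  qed
  have nz: "\<And>c. x \<noteq> 0 - c \<Longrightarrow> c + x \<noteq> 0" using shift_eq by metis
  have nw: "\<And>c w. x \<noteq> w - c \<Longrightarrow> w \<noteq> c + x" using shift_eq by metis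
  have g1: "\<forall>e\<in>E. f' e \<noteq> 0" using g x0 unfolding good_def f'_def by auto
  have g2: "\<forall>d\<in>insert u (insert r D). wdeg E f' d \<noteq> 0"
  proof
    fix d assume d: "d \<in> insert u (insert r D)"
    show "wdeg E f' d \<noteq> 0"
    proof (cases "d = u \<or> d = r")
      case True
      then show ?thesis
      proof
        assume "d = u" then show ?thesis using wu nz[OF xcu] by simp
      next
        assume "d = r" then show ?thesis using wr nz[OF xcr] by simp
      qed
    next
      case False
      then have "d \<in> D" using d by auto
      moreover have "wdeg E f' d = wdeg E f d" using wo False by simp
      ultimately show ?thesis using g unfolding good_def by simp
    qed
  qed
  have keyu: "\<And>d. d \<in> D \<Longrightarrow> {d,u} \<in> E \<Longrightarrow> wdeg E f' d \<noteq> wdeg E f' u"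
  proof -
    fix d assume dD: "d \<in> D" and de: "{d,u} \<in> E"
    then have "d \<noteq> r" "d \<noteq> u" using rD uD by auto
    then have "wdeg E f' d = wdeg E f d" using wo by auto
    moreover have "wdeg E f d \<in> Wu" unfolding Wu_def neighbours_def using dD de by auto
    ultimately show "wdeg E f' d \<noteq> wdeg E f' u" using nw[OF xWu] wu by simp
  qed
  have keyr: "\<And>d. d \<in> D \<Longrightarrow> {d,r} \<in> E \<Longrightarrow> wdeg E f' d \<noteq> wdeg E f' r"
  proof -
    fix d assume dD: "d \<in> D" and de: "{d,r} \<in> E"
    then have "d \<noteq> r" "d \<noteq> u" using rD uD by auto
    then have "wdeg E f' d = wdeg E f d" using wo by auto
    moreover have "wdeg E f d \<in> Wr" unfolding Wr_def neighbours_def using dD de by auto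
    ultimately show "wdeg E f' d \<noteq> wdeg E f' r" using nw[OF xWr] wr by simp
  qed
  have g3: "\<forall>a\<in>insert u (insert r D). \<forall>b\<in>insert u (insert r D). {a,b}\<in>E \<longrightarrow> wdeg E f' a \<noteq> wdeg E f' b"
  proof (intro ballI impI)
    fix a b assume a: "a \<in> insert u (insert r D)" and b: "b \<in> insert u (insert r D)" and ab: "{a,b} \<in> E"
    have "a \<noteq> b" using edge_props[OF sg ab] by auto
    have ba: "{b,a} \<in> E" using ab by (simp add: insert_commute)
    show "wdeg E f' a \<noteq> wdeg E f' b"
    proof (cases "a \<in> D")
      case aD: True
      show ?thesis
      proof (cases "b \<in> D")
        case bD: True
        have "a \<noteq> r" "a \<noteq> u" "b \<noteq> r" "b \<noteq> u" using aD bD rD uD by auto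
        then have "wdeg E f' a = wdeg E f a" "wdeg E f' b = wdeg E f b"
          using wo by auto
        moreover have "wdeg E f a \<noteq> wdeg E f b" using g aD bD ab unfolding good_def by blast
        ultimately show ?thesis by simp
      next
        case False
        then have "b = u \<or> b = r" using b by auto
        then show ?thesis
        proof
          assume "b = u" then show ?thesis using keyu[OF aD] ab by simp
        next
          assume "b = r" then show ?thesis using keyr[OF aD] ab by simp
        qed
      qed
    next
      case False
      then have a2: "a = u \<or> a = r" using a by auto
      show ?thesis
      proof (cases "b \<in> D")
        case bD: True
        from a2 show ?thesis
        proof
          assume "a = u" then show ?thesis using keyu[OF bD] ba by metis
        next
          assume "a = r" then show ?thesis using keyr[OF bD] ba by metis
        qed
      next
        case False
        then have "b = u \<or> b = r" using b by auto
        then have "(a = u \<and> b = r) \<or> (a = r \<and> b = u)" using a2 \<open>a \<noteq> b\<close> by blast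
        then show ?thesis using neq by auto
      qed
    qed
  qed
  have "good E f' (insert u (insert r D))" unfolding good_def using g1 g2 g3 by blast
  then show ?thesis unfolding f'_def by blast
qed

lemma zstep:
  fixes f :: "'a set \<Rightarrow> 'g::ab_group_add"
  assumes sg: "simple_graph V E" and g: "good E f D" and e: "{q,z} \<in> E"
    and zD: "z \<notin> D" and qD: "q \<notin> D" and pq: "p \<noteq> q" and pz: "p \<noteq> z"
    and cnt: "infinite (UNIV :: 'g set) \<or> degree E z + 2 < card (UNIV :: 'g set)"
  shows "\<exists>f' :: 'a set \<Rightarrow> 'g. good E f' (insert z D) \<and> wdeg E f' q \<noteq> wdeg E f' p"
proof -
  define bad where "bad = wdeg E f p - wdeg E f q + f {q,z}"
  have "infinite (UNIV :: 'g set) \<or> card {bad} + degree E z + 1 < card (UNIV :: 'g set)"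
    using cnt by auto
  then obtain x where x: "x \<notin> {bad}" and g': "good E (f({q,z}:=x)) (insert z D)"
    using step[OF sg g e zD qD, of "{bad}"] by auto
  have "wdeg E (f({q,z}:=x)) q = wdeg E f q - f {q,z} + x" using wdeg_upd[OF sg e, of f x q] by simp
  moreover have "wdeg E (f({q,z}:=x)) p = wdeg E f p" using wdeg_upd[OF sg e, of f x p] pq pz by simp
  moreover have "wdeg E f q - f {q,z} + x \<noteq> wdeg E f p"
  proof
    assume "wdeg E f q - f {q,z} + x = wdeg E f p"
    then have "x = bad" unfolding bad_def by (simp add: algebra_simps)
    then show False using x by simp
  qed
  ultimately have ne: "wdeg E (f({q,z}:=x)) q \<noteq> wdeg E (f({q,z}:=x)) p" by simp
  show ?thesis by (rule exI[of _ "f({q,z}:=x)"]) (use ne g' in simp)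
qed


lemma adj_sym: "adjacent E a b = adjacent E b a"
  unfolding adjacent_def by (simp add: insert_commute)

lemma reach_sym:
  assumes "(adjacent E)\<^sup>*\<^sup>* a b" shows "(adjacent E)\<^sup>*\<^sup>* b a"
  using assms
proof (induction rule: rtranclp_induct)
  case base then show ?case by simp
next
  case (step y z)
  then have "adjacent E z y" using adj_sym by metis
  then show ?case using step(3) by (rule converse_rtranclp_into_rtranclp)
qed

lemma comp_sub: "component V E v0 \<subseteq> V"
  unfolding component_def by auto

lemma comp_closed:
  assumes sg: "simple_graph V E" and c: "c \<in> component V E v0" and e: "{c,d} \<in> E"
  shows "d \<in> component V E v0"
proof -
  have "d \<in> V" using edge_props[OF sg e] by auto
  moreover have "(adjacent E)\<^sup>*\<^sup>* v0 c" using c unfolding component_def by auto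
  moreover have "adjacent E c d" using e unfolding adjacent_def by simp
  ultimately show ?thesis unfolding component_def by auto
qed

lemma comp_reach:
  assumes a: "a \<in> component V E v0" and b: "b \<in> component V E v0"
  shows "(adjacent E)\<^sup>*\<^sup>* a b"
proof -
  have "(adjacent E)\<^sup>*\<^sup>* v0 a" "(adjacent E)\<^sup>*\<^sup>* v0 b" using a b unfolding component_def by auto
  then show ?thesis using reach_sym by (metis rtranclp_trans)
qed

lemma col_prop:
  assumes sg: "simple_graph V E" and sub: "subgraph V' E' V E" and ne: "V' \<noteq> {}"
  shows "\<exists>v\<in>V'. degree E' v < col V E"
proof -
  let ?P = "\<lambda>k. \<forall>V' E'. subgraph V' E' V E \<and> V' \<noteq> {} \<longrightarrow> (\<exists>v\<in>V'. degree E' v < k)"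
  have "?P (Suc (card V))"
  proof (intro allI impI)
    fix V1 E1 assume h: "subgraph V1 E1 V E \<and> V1 \<noteq> {}"
    then obtain v where v: "v \<in> V1" by blast
    have "neighbours E1 v \<subseteq> V" using h unfolding subgraph_def neighbours_def by blast
    then have "card (neighbours E1 v) \<le> card V" using sg unfolding simple_graph_def
      by (simp add: card_mono)
    then have "degree E1 v < Suc (card V)" unfolding degree_def by (rule le_imp_less_Suc)
    then show "\<exists>v\<in>V1. degree E1 v < Suc (card V)" using v by blast
  qed
  then have "?P (col V E)" unfolding col_def by (rule LeastI)
  then show ?thesis using sub ne by blast
qed

lemma stage1:
  fixes f :: "'a set \<Rightarrow> 'g::ab_group_add" and h :: "'a \<Rightarrow> nat"
  assumes sg: "simple_graph V E" and CV: "C \<subseteq> V" and KC: "K \<subseteq> C"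
    and hyp: "\<forall>v\<in>C-K. \<exists>y\<in>C. {y,v}\<in>E \<and> h y < h v"
    and cnt: "infinite (UNIV :: 'g set) \<or> max_degree V E + 2 < card (UNIV :: 'g set)"
    and DC: "D \<inter> C = {}"
  shows "card U = n \<Longrightarrow> K \<subseteq> U \<Longrightarrow> U \<subseteq> C \<Longrightarrow> (\<forall>a\<in>U-K. \<forall>b\<in>C. h b < h a \<longrightarrow> b \<in> U)
     \<Longrightarrow> good E f (D \<union> (C - U)) \<Longrightarrow> \<exists>f'::'a set \<Rightarrow> 'g. good E f' (D \<union> (C - K))"
proof (induction n arbitrary: U f)
  case 0
  have "finite V" using sg unfolding simple_graph_def by simp
  then have "finite U" using 0(3) CV by (meson finite_subset)
  then have "U = {}" using 0(1) by simp
  then have "U = K" using 0(2) by simp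
  then show ?case using 0(5) by blast
next
  case (Suc n)
  show ?case
  proof (cases "U = K")
    case True then show ?thesis using Suc.prems(5) by blast
  next
    case False
    have "finite V" using sg unfolding simple_graph_def by simp
    then have finU: "finite U" using Suc.prems(3) CV by (meson finite_subset)
    have ne: "U - K \<noteq> {}" using False Suc.prems(2) by blast
    have finUK: "finite (h ` (U - K))" using finU by simp
    have "Max (h ` (U - K)) \<in> h ` (U - K)" using Max_in[OF finUK] ne by blast
    then obtain v where vUK: "v \<in> U - K" and hv: "h v = Max (h ` (U - K))" by auto
    have vmax: "\<And>w. w \<in> U - K \<Longrightarrow> h w \<le> h v" using hv finUK by simp
    have vC: "v \<in> C - K" using vUK Suc.prems(3) by blast
    obtain y where yC: "y \<in> C" and e: "{y,v} \<in> E" and hy: "h y < h v" using hyp vC by blast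
    have yU: "y \<in> U" using Suc.prems(4) vUK yC hy by blast
    have vD: "v \<notin> D \<union> (C - U)" using vUK vC DC by blast
    have yD: "y \<notin> D \<union> (C - U)" using yU yC DC by blast
    have "degree E v \<le> max_degree V E" using deg_le[OF sg] vC CV by blast
    then have cnt': "infinite (UNIV :: 'g set) \<or> card ({}::'g set) + degree E v + 1 < card (UNIV :: 'g set)"
      using cnt by auto
    obtain x where g': "good E (f({y,v}:=x)) (insert v (D \<union> (C - U)))"
      using step[OF sg Suc.prems(5) e vD yD finite.emptyI cnt'] by blast
    have seteq: "insert v (D \<union> (C - U)) = D \<union> (C - (U - {v}))" using vC by blast
    have c1: "card (U - {v}) = n" using Suc.prems(1) vUK finU by simp
    have c2: "K \<subseteq> U - {v}" using Suc.prems(2) vUK by blast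
    have c3: "U - {v} \<subseteq> C" using Suc.prems(3) by blast
    have c4: "\<forall>a\<in>(U - {v})-K. \<forall>b\<in>C. h b < h a \<longrightarrow> b \<in> U - {v}"
    proof (intro ballI impI)
      fix a b assume a: "a \<in> (U - {v}) - K" and b: "b \<in> C" and hb: "h b < h a"
      then have "b \<in> U" using Suc.prems(4) by blast
      moreover have "h a \<le> h v" using vmax a by blast
      then have "b \<noteq> v" using hb by auto
      ultimately show "b \<in> U - {v}" by blast
    qed
    have "good E (f({y,v}:=x)) (D \<union> (C - (U - {v})))" using g' unfolding seteq .
    then show ?thesis by (rule Suc.IH[OF c1 c2 c3 c4])
  qed
qed


lemma comp_step:
  fixes f :: "'a set \<Rightarrow> 'g::ab_group_add"
  assumes sg: "simple_graph V E"
    and cnt: "infinite (UNIV :: 'g set) \<or> max_degree V E + col V E + 1 \<le> card (UNIV :: 'g set)"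
    and v0: "v0 \<in> V" and C: "C = component V E v0" and c3: "card C \<ge> 3"
    and g: "good E f D" and DC: "D \<inter> C = {}"
  shows "\<exists>f'::'a set \<Rightarrow> 'g. good E f' (D \<union> C)"
proof -
  have CV: "C \<subseteq> V" unfolding C by (rule comp_sub)
  have finV: "finite V" using sg unfolding simple_graph_def by simp
  have finC: "finite C" using CV finV by (meson finite_subset)
  have v0C: "v0 \<in> C" using C v0 unfolding component_def by simp
  have clos: "\<And>c d. c \<in> C \<Longrightarrow> {c,d} \<in> E \<Longrightarrow> d \<in> C" unfolding C by (rule comp_closed[OF sg])
  have reach: "\<And>a b. a \<in> C \<Longrightarrow> b \<in> C \<Longrightarrow> (adjacent E)\<^sup>*\<^sup>* a b" unfolding C by (rule comp_reach)
  define E' where "E' = {e\<in>E. e \<subseteq> C}"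
  have sub: "subgraph C E' V E" unfolding subgraph_def E'_def using CV by auto
  have Cne: "C \<noteq> {}" using v0C by blast
  obtain r where rC: "r \<in> C" and dr': "degree E' r < col V E"
    using col_prop[OF sg sub Cne] by blast
  have "neighbours E' r = neighbours E r"
  proof
    show "neighbours E' r \<subseteq> neighbours E r" unfolding neighbours_def E'_def by blast
  next
    show "neighbours E r \<subseteq> neighbours E' r"
    proof
      fix w assume "w \<in> neighbours E r"
      then have e: "{w,r} \<in> E" unfolding neighbours_def by simp
      then have "{r,w} \<in> E" by (simp add: insert_commute)
      then have "w \<in> C" using clos rC by blast
      then show "w \<in> neighbours E' r" unfolding neighbours_def E'_def using e rC by simp
    qed
  qed
  then have dr: "degree E r < col V E" using dr' unfolding degree_def by simp
  obtain u where ru: "{r,u} \<in> E"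
  proof (rule ccontr)
    assume "\<not> thesis"
    then have no: "\<And>u. {r,u} \<notin> E" using that by blast
    have "C \<subseteq> {r}"
    proof
      fix c assume "c \<in> C"
      then have "(adjacent E)\<^sup>*\<^sup>* r c" using reach rC by blast
      then show "c \<in> {r}"
        by (cases rule: converse_rtranclpE) (use no in \<open>auto simp: adjacent_def\<close>)
    qed
    then have "card C \<le> card {r}" by (intro card_mono) simp_all
    then have "card C \<le> 1" by simp
    then show False using c3 by simp
  qed
  have uC: "u \<in> C" using clos rC ru by blast
  have rneu: "r \<noteq> u" using edge_props[OF sg ru] by blast
  obtain q z where qru: "q \<in> {r,u}" and zC: "z \<in> C" and zru: "z \<notin> {r,u}" and qz: "{q,z} \<in> E"
  proof (rule ccontr)
    assume "\<not> thesis"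
    then have no: "\<And>q z. q \<in> {r,u} \<Longrightarrow> z \<in> C \<Longrightarrow> z \<notin> {r,u} \<Longrightarrow> {q,z} \<notin> E" using that by blast
    have "C \<subseteq> {r,u}"
    proof
      fix c assume "c \<in> C"
      then have "(adjacent E)\<^sup>*\<^sup>* r c" using reach rC by blast
      then show "c \<in> {r,u}"
      proof (induction rule: rtranclp_induct)
        case base then show ?case by simp
      next
        case (step b d)
        have bC: "b \<in> C" using step(3) rC uC by blast
        have e: "{b,d} \<in> E" using step(2) unfolding adjacent_def .
        have dC: "d \<in> C" using clos bC e by blast
        show ?case using no[OF step(3) dC] e by blast
      qed
    qed
    then have "card C \<le> card {r,u}" by (intro card_mono) simp_all
    also have "\<dots> \<le> 2" by (simp add: card_insert_if)
    finally show False using c3 by simp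
  qed
  define K where "K = {r,u,z}"
  have KC: "K \<subseteq> C" unfolding K_def using rC uC zC by blast
  define h where "h v = (LEAST n. \<exists>k\<in>K. (adjacent E ^^ n) v k)" for v
  have hyp: "\<forall>v\<in>C-K. \<exists>y\<in>C. {y,v}\<in>E \<and> h y < h v"
  proof
    fix v assume vCK: "v \<in> C - K"
    have "(adjacent E)\<^sup>*\<^sup>* v r" using reach rC vCK by blast
    then obtain n where "(adjacent E ^^ n) v r" by (blast dest: rtranclp_imp_relpowp)
    then have ex: "\<exists>n. \<exists>k\<in>K. (adjacent E ^^ n) v k" unfolding K_def by blast
    then have "\<exists>k\<in>K. (adjacent E ^^ h v) v k" unfolding h_def by (rule LeastI_ex)
    then obtain k where kK: "k \<in> K" and pk: "(adjacent E ^^ h v) v k" by blast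
    show "\<exists>y\<in>C. {y,v}\<in>E \<and> h y < h v"
    proof (cases "h v")
      case 0
      then have "v = k" using pk by simp
      then show ?thesis using kK vCK by blast
    next
      case (Suc m)
      then obtain y where a: "adjacent E v y" and py: "(adjacent E ^^ m) y k"
        using relpowp_Suc_D2[of m "adjacent E" v k] pk Suc by auto
      have "h y \<le> m" unfolding h_def using py kK by (intro Least_le) blast
      then have "h y < h v" using Suc by simp
      moreover have "{v,y} \<in> E" using a unfolding adjacent_def .
      moreover have "y \<in> C" using clos vCK calculation(2) by blast
      ultimately show ?thesis by (metis insert_commute)
    qed
  qed
  have rV: "r \<in> V" and uV: "u \<in> V" and zV: "z \<in> V" using rC uC zC CV by auto
  have "u \<in> neighbours E r" using ru unfolding neighbours_def by (simp add: insert_commute)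
  then have "neighbours E r \<noteq> {}" by blast
  then have "card (neighbours E r) > 0" using nb_sub[OF sg, of r] by (simp add: card_gt_0_iff)
  then have "degree E r \<ge> 1" unfolding degree_def by simp
  then have col2: "col V E \<ge> 2" using dr by linarith
  have cnt2: "infinite (UNIV :: 'g set) \<or> max_degree V E + 2 < card (UNIV :: 'g set)"
    using cnt col2 by linarith
  have gC: "good E f (D \<union> (C - C))" using g by simp
  obtain f1 :: "'a set \<Rightarrow> 'g" where g1: "good E f1 (D \<union> (C - K))"
    using stage1[OF sg CV KC hyp cnt2 DC, where n="card C" and U=C and f=f] gC KC by blast
  define D1 where "D1 = D \<union> (C - K)"
  have zD1: "z \<notin> D1" and qD1: "q \<notin> D1" and rD1: "r \<notin> D1" and uD1: "u \<notin> D1"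
    unfolding D1_def K_def using DC zC rC uC qru by auto
  define p where "p = (if q = r then u else r)"
  have pq: "p \<noteq> q" unfolding p_def using qru rneu by auto
  have pz: "p \<noteq> z" unfolding p_def using zru by auto
  have "degree E z \<le> max_degree V E" using deg_le[OF sg zV] .
  then have cz: "infinite (UNIV :: 'g set) \<or> degree E z + 2 < card (UNIV :: 'g set)"
    using cnt2 by linarith
  obtain f2 :: "'a set \<Rightarrow> 'g" where g2: "good E f2 (insert z D1)" and ne2: "wdeg E f2 q \<noteq> wdeg E f2 p"
    using zstep[OF sg g1[folded D1_def] qz zD1 qD1 pq pz cz] by blast
  have ne: "wdeg E f2 r \<noteq> wdeg E f2 u" using ne2 qru unfolding p_def by (auto split: if_splits)
  have "degree E u \<le> max_degree V E" using deg_le[OF sg uV] .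
  then have cu: "infinite (UNIV :: 'g set) \<or> degree E u + degree E r + 1 < card (UNIV :: 'g set)"
    using cnt dr by linarith
  have rD2: "r \<notin> insert z D1" and uD2: "u \<notin> insert z D1" using rD1 uD1 zru by auto
  obtain x where g3: "good E (f2({r,u}:=x)) (insert u (insert r (insert z D1)))"
    using ustep[OF sg g2 ru rD2 uD2 ne cu] by blast
  have "insert u (insert r (insert z D1)) = D \<union> C" unfolding D1_def using KC unfolding K_def by blast
  then have "good E (f2({r,u}:=x)) (D \<union> C)" using g3 by simp
  then show ?thesis by blast
qed

definition closedD :: "'a set set \<Rightarrow> 'a set \<Rightarrow> bool" where
  "closedD E D \<longleftrightarrow> (\<forall>a b. {a,b} \<in> E \<longrightarrow> a \<in> D \<longrightarrow> b \<in> D)"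

lemma main_ind:
  assumes sg: "simple_graph V E" and c3: "\<forall>v\<in>V. card (component V E v) \<ge> 3"
    and cnt: "infinite (UNIV :: 'g::ab_group_add set) \<or> max_degree V E + col V E + 1 \<le> card (UNIV :: 'g set)"
  shows "\<forall>D (f :: 'a set \<Rightarrow> 'g). card (V - D) = n \<longrightarrow> D \<subseteq> V \<longrightarrow> closedD E D \<longrightarrow> good E f D
     \<longrightarrow> (\<exists>f'::'a set \<Rightarrow> 'g. good E f' V)"
proof (induction n rule: less_induct)
  case (less n)
  show ?case
  proof (intro allI impI)
    fix D and f :: "'a set \<Rightarrow> 'g"
    assume cD: "card (V - D) = n" and DV: "D \<subseteq> V" and cl: "closedD E D" and g: "good E f D"
    have finV: "finite V" using sg unfolding simple_graph_def by simp
    show "\<exists>f'::'a set \<Rightarrow> 'g. good E f' V"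
    proof (cases "V - D = {}")
      case True
      then have "D = V" using DV by blast
      then show ?thesis using g by blast
    next
      case False
      then obtain v0 where v0: "v0 \<in> V" "v0 \<notin> D" by blast
      define C where "C = component V E v0"
      have CV: "C \<subseteq> V" unfolding C_def by (rule comp_sub)
      have v0C: "v0 \<in> C" using C_def v0 unfolding component_def by simp
      have DC: "D \<inter> C = {}"
      proof (rule ccontr)
        assume "D \<inter> C \<noteq> {}"
        then obtain c where cD': "c \<in> D" and cC: "c \<in> C" by blast
        have "(adjacent E)\<^sup>*\<^sup>* c v0" using comp_reach[of c V E v0 v0] cC v0C C_def by blast
        then have "v0 \<in> D" using cD'
        proof (induction rule: rtranclp_induct)
          case base then show ?case by simp
        next
          case (step b d)
          then show ?case using cl unfolding closedD_def adjacent_def by blast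
        qed
        then show False using v0 by blast
      qed
      obtain f1 :: "'a set \<Rightarrow> 'g" where g1: "good E f1 (D \<union> C)"
        using comp_step[OF sg cnt v0(1) C_def _ g DC] c3 v0 C_def by blast
      have cl1: "closedD E (D \<union> C)" using cl comp_closed[OF sg] unfolding closedD_def C_def by blast
      have DV1: "D \<union> C \<subseteq> V" using DV CV by blast
      have "V - (D \<union> C) \<subset> V - D" using v0 v0C by blast
      then have lt: "card (V - (D \<union> C)) < n" using cD finV by (metis finite_Diff psubset_card_mono)
      show ?thesis using less.IH[OF lt] DV1 cl1 g1 by blast
    qed
  qed
qed

theorem mainTheorem6:
  fixes V :: "'a set" and E :: "'a set set"
  assumes "simple_graph V E"
    and "\<forall>v\<in>V. card (component V E v) \<ge> 3"
    and "infinite (UNIV :: 'g::ab_group_add set) \<or>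
         max_degree V E + col V E + 1 \<le> card (UNIV :: 'g set)"
  shows "\<exists>f :: 'a set \<Rightarrow> 'g. (\<forall>e\<in>E. f e \<noteq> 0) \<and> (\<forall>v\<in>V. wdeg E f v \<noteq> 0) \<and>
           (\<forall>u v. {u, v} \<in> E \<longrightarrow> wdeg E f u \<noteq> wdeg E f v)"
proof (cases "V = {}")
  case True
  then have "\<forall>e\<in>E. e = {} \<and> card e = 2" using assms(1) unfolding simple_graph_def by blast
  then have "E = {}" by force
  then show ?thesis using True by simp
next
  case False
  have sub: "subgraph V {} V E" unfolding subgraph_def by simp
  obtain w where "w \<in> V" "degree {} w < col V E" using col_prop[OF assms(1) sub False] by blast
  then have "col V E \<ge> 1" by simp
  then have "infinite (UNIV :: 'g set) \<or> card {0::'g} < card (UNIV :: 'g set)" using assms(3) by auto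
  then obtain x0 :: 'g where x0: "x0 \<notin> {0}" using avoid[of "{0::'g}"] by blast
  have g0: "good E (\<lambda>_. x0) {}" unfolding good_def using x0 by simp
  have cl0: "closedD E {}" unfolding closedD_def by simp
  obtain f :: "'a set \<Rightarrow> 'g" where g: "good E f V"
    using main_ind[OF assms, of "card (V - {})"] g0 cl0 by blast
  have "\<forall>u v. {u, v} \<in> E \<longrightarrow> wdeg E f u \<noteq> wdeg E f v"
  proof (intro allI impI)
    fix u v assume e: "{u,v} \<in> E"
    then have "u \<in> V" "v \<in> V" using edge_props[OF assms(1) e] by auto
    then show "wdeg E f u \<noteq> wdeg E f v" using g e unfolding good_def by blast
  qed
  then show ?thesis using g unfolding good_def by blast
qed

end
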